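(* Let $C \subseteq \mathbb{R}^n$ be a nonempty closed convex set, let $\mathcal{H}$ be a hyperplane arrangement in $\mathbb{R}^n$, let $x \in \mathbb{R}^n$, and let $\delta$ be a convex distance function to $x$. Let $A$ be a pattern such that $R_A$ contains a point of $\operatorname{argmin}_{v \in C} \delta(v)$, and let $A'$ be a pattern with $R_{A'} \cap C \neq \emptyset$. Then there is a sequence of patterns $A = A^1, A^2, \dots, A^{k}, A^{k+1} = A'$ such that: (i) $A^i$ and $A^{i+1}$ are neighbors for all $i \in [k]$; (ii) $\operatorname{dist}(R_{A^i} \cap C) \le \operatorname{dist}(R_{A^{i+1}} \cap C)$ for all $i \in [k]$; (iii) $R_{A^i} \cap C \neq \emptyset$ for all $i \in [k+1]$.
   Context: A hyperplane is a set $\{v : a^\top v = b\}$ with $a \in \mathbb{R}^n\setminus\{0\}$, $b \in \mathbb{R}$; its halfspaces are $H^{\le} = \{v : a^\top v \le b\}$ and $H^{\ge} = \{v : a^\top v \ge b\}$. A hyperplane arrangement $\mathcal{H}$ is a finite set of hyperplanes, each with a fixed representation $(a,b)$. A pattern is a function $P : \mathcal{H} \to \{-1,1\}$, and its region is the closed polyhedron $R_P := \bigcap_{P(H)=-1} H^{\le} \cap \bigcap_{P(H)=1} H^{\ge}$. Two patterns are neighbors if they differ on exactly one hyperplane. A convex distance function to $x$ is a convex, continuous function $\delta : \mathbb{R}^n \to [0,\infty)$ with bounded sublevel sets and $\delta(x)=0$ (e.g. $\delta(v) = \|v - x\|_p$, $p \ge 1$); for a nonempty closed set $S$, $\operatorname{dist}(S)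 := \min_{v \in S} \delta(v)$. $[k] = \{1,\dots,k\}$. *)

theory Defs
  imports "HOL-Analysis.Analysis"
begin

definition hyperplane_of :: "'a::euclidean_space \<times> real \<Rightarrow> 'a set" where
  "hyperplane_of h = {v. fst h \<bullet> v = snd h}"

definition hyperplane_arrangement :: "('a::euclidean_space \<times> real) set \<Rightarrow> bool" where
  "hyperplane_arrangement H \<longleftrightarrow> finite H \<and> (\<forall>h\<in>H. fst h \<noteq> 0) \<and> inj_on hyperplane_of H"

definition patterns :: "('a::euclidean_space \<times> real) set \<Rightarrow> ('a \<times> real \<Rightarrow> int) set" where
  "patterns H = H \<rightarrow>\<^sub>E {-1, 1}"

definition region :: "('a::euclidean_space \<times> real) set \<Rightarrow> ('a \<times> real \<Rightarrow> int) \<Rightarrow> 'a set" where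
  "region H P = {v. \<forall>h\<in>H. (P h = -1 \<longrightarrow> fst h \<bullet> v \<le> snd h) \<and> (P h = 1 \<longrightarrow> fst h \<bullet> v \<ge> snd h)}"

definition neighbors :: "('a::euclidean_space \<times> real) set \<Rightarrow> ('a \<times> real \<Rightarrow> int) \<Rightarrow> ('a \<times> real \<Rightarrow> int) \<Rightarrow> bool" where
  "neighbors H P Q \<longleftrightarrow> card {h\<in>H. P h \<noteq> Q h} = 1"

definition convex_distance_function :: "('a::euclidean_space \<Rightarrow> real) \<Rightarrow> 'a \<Rightarrow> bool" where
  "convex_distance_function \<delta> x \<longleftrightarrow>
     convex_on UNIV \<delta> \<and> continuous_on UNIV \<delta> \<and> (\<forall>v. \<delta> v \<ge> 0) \<and>
     (\<forall>t. bounded {v. \<delta> v \<le> t}) \<and> \<delta> x = 0"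

text \<open>dist(S) = min over S of \<delta> (attained for nonempty closed S); written as an infimum.\<close>
definition distS :: "('a \<Rightarrow> real) \<Rightarrow> 'a set \<Rightarrow> real" where
  "distS \<delta> S = (INF v\<in>S. \<delta> v)"

definition argmin_on :: "('a \<Rightarrow> real) \<Rightarrow> 'a set \<Rightarrow> 'a set" where
  "argmin_on \<delta> C = {v\<in>C. \<forall>w\<in>C. \<delta> v \<le> \<delta> w}"

end

theory Submission
  imports Defs
begin

lemma region_iff:
  assumes "P \<in> patterns H"
  shows "v \<in> region H P \<longleftrightarrow> (\<forall>h\<in>H. 0 \<le> real_of_int (P h) * (fst h \<bullet> v - snd h))"
proof -
  have "\<And>h. h \<in> H \<Longrightarrow> P h = -1 \<or> P h = 1" using assms unfolding patterns_def by auto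
  have "\<And>h. h \<in> H \<Longrightarrow> ((P h = -1 \<longrightarrow> fst h \<bullet> v \<le> snd h) \<and> (P h = 1 \<longrightarrow> fst h \<bullet> v \<ge> snd h))
      \<longleftrightarrow> 0 \<le> real_of_int (P h) * (fst h \<bullet> v - snd h)"
  proof -
    fix h assume "h \<in> H"
    then consider "P h = -1" | "P h = 1" using \<open>\<And>h. h \<in> H \<Longrightarrow> P h = -1 \<or> P h = 1\<close> by blast
    then show "?thesis h" by cases auto
  qed
  then show ?thesis unfolding region_def by auto
qed

lemma region_closed: "closed (region H P)"
proof -
  have "region H P = (\<Inter>h\<in>H. {v. (P h = -1 \<longrightarrow> fst h \<bullet> v \<le> snd h)} \<inter> {v. (P h = 1 \<longrightarrow> fst h \<bullet> v \<ge> snd h)})"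
    unfolding region_def by auto
  moreover have "closed {v. (P h = -1 \<longrightarrow> fst h \<bullet> v \<le> snd h)}" for h
    by (cases "P h = -1") (auto simp: closed_halfspace_le)
  moreover have "closed {v. (P h = 1 \<longrightarrow> fst h \<bullet> v \<ge> snd h)}" for h
    by (cases "P h = 1") (auto simp: closed_halfspace_ge)
  ultimately show ?thesis by (auto intro!: closed_INT closed_Int)
qed

lemma root_lemma:
  fixes g0 g1 :: real
  assumes "g0 \<le> 0" "0 \<le> g1"
  defines "t \<equiv> (if g1 = g0 then 0 else - g0 / (g1 - g0))"
  shows "0 \<le> t" "t \<le> 1" "(1 - t) * g0 + t * g1 = 0"
    "\<And>s. t \<le> s \<Longrightarrow> s \<le> 1 \<Longrightarrow> 0 \<le> (1 - s) * g0 + s * g1"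
proof -
  show "0 \<le> t" using assms by (auto simp: t_def divide_simps)
  show "t \<le> 1" using assms by (auto simp: t_def divide_simps)
  show "(1 - t) * g0 + t * g1 = 0" using assms by (auto simp: t_def field_simps)
  fix s assume s: "t \<le> s" "s \<le> 1"
  show "0 \<le> (1 - s) * g0 + s * g1"
  proof (cases "g1 = g0")
    case True thus ?thesis using assms by auto
  next
    case False
    hence gt: "g1 - g0 > 0" using assms by auto
    have "(1 - s) * g0 + s * g1 = g0 + s * (g1 - g0)" by (simp add: algebra_simps)
    also have "\<dots> \<ge> g0 + t * (g1 - g0)" using s gt by (simp add: mult_right_mono)
    also have "g0 + t * (g1 - g0) = 0" using False gt by (simp add: t_def field_simps)
    finally show ?thesis by simp
  qed
qed

lemma affine_nonneg:
  fixes g0 g1 s :: real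
  assumes "0 \<le> g0" "0 \<le> g1" "0 \<le> s" "s \<le> 1"
  shows "0 \<le> (1 - s) * g0 + s * g1"
  using assms by (simp add: add_nonneg_nonneg)

lemma affine_inner:
  "real_of_int c * (a \<bullet> ((1 - t) *\<^sub>R y + t *\<^sub>R z) - b)
   = (1 - t) * (real_of_int c * (a \<bullet> y - b)) + t * (real_of_int c * (a \<bullet> z - b))"
  by (simp add: inner_add_right algebra_simps)

lemma minimizer:
  assumes cdf: "convex_distance_function \<delta> x" and K: "closed K" "K \<noteq> {}"
  shows "\<exists>z\<in>K. \<forall>w\<in>K. \<delta> z \<le> \<delta> w"
proof -
  obtain w0 where w0: "w0 \<in> K" using K by auto
  have cont: "continuous_on UNIV \<delta>" and bd: "bounded {v. \<delta> v \<le> \<delta> w0}"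
    using cdf unfolding convex_distance_function_def by auto
  define L where "L = K \<inter> {v. \<delta> v \<le> \<delta> w0}"
  have "closed {v. \<delta> v \<le> \<delta> w0}"
    using cont by (intro closed_Collect_le) (auto intro: continuous_on_subset continuous_intros)
  hence "compact L" unfolding L_def using K bd
    by (meson bounded_Int compact_eq_bounded_closed closed_Int)
  moreover have "L \<noteq> {}" using w0 L_def by auto
  moreover have "continuous_on L \<delta>" using cont continuous_on_subset by blast
  ultimately obtain z where z: "z \<in> L" "\<forall>w\<in>L. \<delta> z \<le> \<delta> w"
    using continuous_attains_inf by blast
  show ?thesis
  proof (intro bexI ballI)
    fix w assume "w \<in> K"
    show "\<delta> z \<le> \<delta> w"
      using z \<open>w \<in> K\<close> unfolding L_def by (cases "\<delta> w \<le> \<delta> w0") auto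
  next
    show "z \<in> K" using z L_def by auto
  qed
qed

lemma distS_le:
  assumes "\<forall>v. \<delta> v \<ge> 0" "p \<in> S"
  shows "distS \<delta> S \<le> \<delta> p"
  unfolding distS_def using assms by (intro cINF_lower) (auto intro: bdd_belowI2)

lemma distS_ge:
  assumes "S \<noteq> {}" "\<forall>w\<in>S. c \<le> \<delta> w"
  shows "c \<le> distS \<delta> S"
  unfolding distS_def using assms by (intro cINF_greatest) auto

theorem mainTheorem4:
  fixes C :: "'a::euclidean_space set"
    and H :: "('a \<times> real) set"
    and x :: 'a
    and \<delta> :: "'a \<Rightarrow> real"
    and A A' :: "'a \<times> real \<Rightarrow> int"
  assumes "C \<noteq> {}" and "closed C" and "convex C"
    and "hyperplane_arrangement H"
    and "convex_distance_function \<delta> x"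
    and "A \<in> patterns H" and "region H A \<inter> argmin_on \<delta> C \<noteq> {}"
    and "A' \<in> patterns H" and "region H A' \<inter> C \<noteq> {}"
  shows "\<exists>(k::nat) (S :: nat \<Rightarrow> ('a \<times> real \<Rightarrow> int)).
           S 1 = A \<and> S (k + 1) = A' \<and>
           (\<forall>i\<in>{1..k+1}. S i \<in> patterns H) \<and>
           (\<forall>i\<in>{1..k}. neighbors H (S i) (S (i + 1))) \<and>
           (\<forall>i\<in>{1..k}. distS \<delta> (region H (S i) \<inter> C) \<le> distS \<delta> (region H (S (i + 1)) \<inter> C)) \<and>
           (\<forall>i\<in>{1..k+1}. region H (S i) \<inter> C \<noteq> {})"
proof -
  have d0: "\<forall>v. \<delta> v \<ge> 0" and cvx: "convex_on UNIV \<delta>"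
    using assms(5) unfolding convex_distance_function_def by auto
  have finH: "finite H" using assms(4) unfolding hyperplane_arrangement_def by auto
  obtain y where y: "y \<in> region H A" "y \<in> C" "\<forall>w\<in>C. \<delta> y \<le> \<delta> w"
    using assms(7) unfolding argmin_on_def by auto
  have AH: "\<And>h. h \<in> H \<Longrightarrow> A h = -1 \<or> A h = 1" using assms(6) unfolding patterns_def by auto
  have main: "\<forall>A'. A' \<in> patterns H \<longrightarrow> region H A' \<inter> C \<noteq> {} \<longrightarrow> card {h\<in>H. A h \<noteq> A' h} = n \<longrightarrow>
     (\<exists>(k::nat) (S :: nat \<Rightarrow> ('a \<times> real \<Rightarrow> int)).
           S 1 = A \<and> S (k + 1) = A' \<and>
           (\<forall>i\<in>{1..k+1}. S i \<in> patterns H) \<and>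
           (\<forall>i\<in>{1..k}. neighbors H (S i) (S (i + 1))) \<and>
           (\<forall>i\<in>{1..k}. distS \<delta> (region H (S i) \<inter> C) \<le> distS \<delta> (region H (S (i + 1)) \<inter> C)) \<and>
           (\<forall>i\<in>{1..k+1}. region H (S i) \<inter> C \<noteq> {}))" for n
  proof (induction n)
    case 0
    show ?case
    proof (intro allI impI)
      fix A' assume A': "A' \<in> patterns H" "region H A' \<inter> C \<noteq> {}" "card {h\<in>H. A h \<noteq> A' h} = 0"
      have e: "{h\<in>H. A h \<noteq> A' h} = {}" using A'(3) finH by simp
      have "A = A'"
      proof (rule ext)
        fix h show "A h = A' h"
        proof (cases "h \<in> H")
          case True thus ?thesis using e by blast
        next
          case False thus ?thesis using assms(6) A'(1) unfolding patterns_def by (metis PiE_arb)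
        qed
      qed
      then show "\<exists>(k::nat) (S :: nat \<Rightarrow> ('a \<times> real \<Rightarrow> int)).
           S 1 = A \<and> S (k + 1) = A' \<and>
           (\<forall>i\<in>{1..k+1}. S i \<in> patterns H) \<and>
           (\<forall>i\<in>{1..k}. neighbors H (S i) (S (i + 1))) \<and>
           (\<forall>i\<in>{1..k}. distS \<delta> (region H (S i) \<inter> C) \<le> distS \<delta> (region H (S (i + 1)) \<inter> C)) \<and>
           (\<forall>i\<in>{1..k+1}. region H (S i) \<inter> C \<noteq> {})"
        by (intro exI[of _ 0] exI[of _ "\<lambda>_. A"]) (use A' in auto)
    qed
  next
    case (Suc n)
    show ?case
    proof (intro allI impI)
      fix A' assume A': "A' \<in> patterns H" "region H A' \<inter> C \<noteq> {}" "card {h\<in>H. A h \<noteq> A' h} = Suc n"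
      define D where "D = {h\<in>H. A h \<noteq> A' h}"
      have finD1: "finite D" using finH unfolding D_def by auto
      have finD2: "D \<noteq> {}"
      proof
        assume "D = {}" hence "card D = 0" by simp
        moreover have "card D = Suc n" using A'(3) unfolding D_def .
        ultimately show False by simp
      qed
      note finD = finD1 finD2
      have A'H: "\<And>h. h \<in> H \<Longrightarrow> A' h = -1 \<or> A' h = 1" using A'(1) unfolding patterns_def by auto
      obtain z where z: "z \<in> region H A' \<inter> C" "\<forall>w\<in>region H A' \<inter> C. \<delta> z \<le> \<delta> w"
        using minimizer[OF assms(5) closed_Int[OF region_closed assms(2)] A'(2)] by blast
      define p where "p t = (1-t) *\<^sub>R y + t *\<^sub>R z" for t
      define g0 where "g0 h = real_of_int (A' h) * (fst h \<bullet> y - snd h)" for h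
      define g1 where "g1 h = real_of_int (A' h) * (fst h \<bullet> z - snd h)" for h
      define tt where "tt h = (if g1 h = g0 h then 0 else - g0 h / (g1 h - g0 h))" for h
      have yreg: "\<And>h. h\<in>H \<Longrightarrow> 0 \<le> real_of_int (A h) * (fst h \<bullet> y - snd h)"
        using y(1) unfolding region_iff[OF assms(6)] by blast
      have zreg: "\<And>h. h\<in>H \<Longrightarrow> 0 \<le> g1 h" using z(1) region_iff[OF A'(1), of z] unfolding g1_def by blast
      have g0D: "g0 h \<le> 0" if "h \<in> D" for h
      proof -
        have "h \<in> H" "A h \<noteq> A' h" using that unfolding D_def by auto
        hence hH: "h \<in> H" and "A h = - A' h" using AH[of h] A'H[of h] by auto
        thus ?thesis using yreg[OF hH] unfolding g0_def by simp
      qed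
      have g0nD: "0 \<le> g0 h" if "h \<in> H" "h \<notin> D" for h
        using that yreg[of h] unfolding g0_def D_def by simp
      have pg: "real_of_int (A' h) * (fst h \<bullet> p t - snd h) = (1-t)*g0 h + t*g1 h" for h t
        unfolding p_def g0_def g1_def by (rule affine_inner)
      define ts where "ts = Max (tt ` D)"
      have "ts \<in> tt ` D" unfolding ts_def using finD by (intro Max_in) auto
      then obtain hs where hs: "hs \<in> D" "tt hs = ts" by auto
      have tmax: "\<And>h. h\<in>D \<Longrightarrow> tt h \<le> ts" using finD ts_def by auto
      have hsH: "hs \<in> H" using hs D_def by auto
      have ts01: "0 \<le> ts" "ts \<le> 1" "(1 - ts) * g0 hs + ts * g1 hs = 0"
        using root_lemma[OF g0D[OF hs(1)] zreg[OF hsH]] hs(2) unfolding tt_def by auto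
      define Q where "Q = A'(hs := A hs)"
      have QA: "A hs = - A' hs" using hs AH[of hs] A'H[of hs] unfolding D_def by auto
      have Qpat: "Q \<in> patterns H" using A'(1) AH[OF hsH] hsH unfolding patterns_def Q_def
        by (auto simp: PiE_iff extensional_def)
      have pC: "p ts \<in> C" unfolding p_def using ts01 y(2) z(1) assms(3)
        by (intro convexD) auto
      have pQ: "p ts \<in> region H Q" unfolding region_iff[OF Qpat]
      proof
        fix h assume hH: "h \<in> H"
        show "0 \<le> real_of_int (Q h) * (fst h \<bullet> p ts - snd h)"
        proof (cases "h = hs")
          case True
          have "real_of_int (Q h) * (fst h \<bullet> p ts - snd h) = - (real_of_int (A' hs) * (fst hs \<bullet> p ts - snd hs))"
            using True QA unfolding Q_def by simp
          also have "\<dots> = 0" using pg ts01(3) by simp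
          finally show ?thesis by linarith
        next
          case False
          hence Qh: "Q h = A' h" unfolding Q_def by simp
          show ?thesis
          proof (cases "h \<in> D")
            case True
            have "0 \<le> (1 - ts) * g0 h + ts * g1 h"
              using root_lemma(4)[OF g0D[OF True] zreg[OF hH], of ts] tmax[OF True] ts01
              unfolding tt_def by auto
            thus ?thesis using Qh pg by simp
          next
            case False
            thus ?thesis using Qh pg affine_nonneg[OF g0nD[OF hH False] zreg[OF hH] ts01(1,2)] by simp
          qed
        qed
      qed
      have dp: "\<delta> (p ts) \<le> \<delta> z"
      proof -
        have c: "\<delta> (p ts) \<le> (1 - ts) * \<delta> y + ts * \<delta> z"
          unfolding p_def using convex_onD[OF cvx, of ts y z] ts01 by simp
        have a: "\<delta> y \<le> \<delta> (p ts)" "\<delta> y \<le> \<delta> z" using y(3) pC z(1) by auto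
        show ?thesis
        proof (cases "ts = 0")
          case True hence "p ts = y" unfolding p_def by simp
          thus ?thesis using a by simp
        next
          case False
          have "(1 - ts) * \<delta> y \<le> (1 - ts) * \<delta> (p ts)" using a ts01 by (simp add: mult_left_mono)
          hence "ts * \<delta> (p ts) \<le> ts * \<delta> z" using c by (simp add: algebra_simps)
          thus ?thesis using False ts01 by (simp add: mult_le_cancel_left)
        qed
      qed
      have distQ: "distS \<delta> (region H Q \<inter> C) \<le> distS \<delta> (region H A' \<inter> C)"
      proof -
        have "distS \<delta> (region H Q \<inter> C) \<le> \<delta> (p ts)" using distS_le[OF d0] pQ pC by auto
        also have "\<dots> \<le> \<delta> z" by (rule dp)
        also have "\<dots> \<le> distS \<delta> (region H A' \<inter> C)" using distS_ge[OF A'(2) z(2)] .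
        finally show ?thesis .
      qed
      have "{h\<in>H. A h \<noteq> Q h} = D - {hs}" unfolding D_def Q_def by auto
      hence cardQ: "card {h\<in>H. A h \<noteq> Q h} = n" using A'(3) finD hs(1) unfolding D_def by simp
      have "{h\<in>H. Q h \<noteq> A' h} = {hs}" using hsH QA A'H[OF hsH] unfolding Q_def by auto
      hence nb: "neighbors H Q A'" unfolding neighbors_def by simp
      have QC: "region H Q \<inter> C \<noteq> {}" using pQ pC by auto
      obtain k :: nat and S :: "nat \<Rightarrow> ('a \<times> real \<Rightarrow> int)" where S: "S 1 = A" "S (k + 1) = Q"
           "\<forall>i\<in>{1..k+1}. S i \<in> patterns H"
           "\<forall>i\<in>{1..k}. neighbors H (S i) (S (i + 1))"
           "\<forall>i\<in>{1..k}. distS \<delta> (region H (S i) \<inter> C) \<le> distS \<delta> (region H (S (i + 1)) \<inter> C)"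
           "\<forall>i\<in>{1..k+1}. region H (S i) \<inter> C \<noteq> {}"
        using Suc.IH Qpat QC cardQ by blast
      define S' where "S' = S(k+2 := A')"
      have s1: "S' 1 = A" "S' (Suc k + 1) = A'" using S(1) unfolding S'_def by auto
      have s2: "\<forall>i\<in>{1..Suc k+1}. S' i \<in> patterns H"
        using S(3) A'(1) unfolding S'_def by (auto simp: le_Suc_eq)
      have s3: "\<forall>i\<in>{1..Suc k+1}. region H (S' i) \<inter> C \<noteq> {}"
        using S(6) A'(2) unfolding S'_def by (auto simp: le_Suc_eq)
      have s4: "neighbors H (S' i) (S' (i + 1)) \<and>
          distS \<delta> (region H (S' i) \<inter> C) \<le> distS \<delta> (region H (S' (i + 1)) \<inter> C)"
        if i: "i \<in> {1..Suc k}" for i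
      proof (cases "i = k + 1")
        case True
        thus ?thesis using S(2) nb distQ unfolding S'_def by simp
      next
        case False
        hence "i \<in> {1..k}" "i \<noteq> k+2" "i + 1 \<noteq> k + 2" using i by auto
        thus ?thesis using S(4,5) unfolding S'_def by simp
      qed
      show "\<exists>(k::nat) (S :: nat \<Rightarrow> ('a \<times> real \<Rightarrow> int)).
           S 1 = A \<and> S (k + 1) = A' \<and>
           (\<forall>i\<in>{1..k+1}. S i \<in> patterns H) \<and>
           (\<forall>i\<in>{1..k}. neighbors H (S i) (S (i + 1))) \<and>
           (\<forall>i\<in>{1..k}. distS \<delta> (region H (S i) \<inter> C) \<le> distS \<delta> (region H (S (i + 1)) \<inter> C)) \<and>
           (\<forall>i\<in>{1..k+1}. region H (S i) \<inter> C \<noteq> {})"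
        apply (rule exI[of _ "Suc k"], rule exI[of _ S'])
        using s1 s2 s3 s4 by simp
    qed
  qed
  show ?thesis using main[of "card {h\<in>H. A h \<noteq> A' h}"] assms(8,9) by blast
qed

end
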